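(* Let $\xi_1,\dots,\xi_S$ be finitely many scenarios, $\varepsilon\in(0,1)$, and let $g(\cdot,\xi_i):\mathbb{R}^n\to\mathbb{R}$ be Lipschitz continuous for all $i=1,\dots,S$. Then the quantile function $q$ is Lipschitz continuous. Moreover, if for some $\hat x$ the index $i(\hat x)$ is unique and $g(\cdot,\xi_{i(\hat x)})$ is differentiable around $\hat x$, then $q$ is differentiable at $\hat x$.
   Context: The quantile function is $q(x):=\inf\{t\mid \frac1S\sum_{i=1}^S\chi(g(x,\xi_i)\le t)\ge 1-\varepsilon\}$, where $\chi$ is the $0$-$1$ indicator function (i.e. the $(1-\varepsilon)$-quantile of $g(x,\xi)$ when $\xi$ is uniformly distributed on $\{\xi_1,\dots,\xi_S\}$). For every $x$ there is an index $i(x)\in\{1,\dots,S\}$ with $q(x)=g(x,\xi_{i(x)})$; "$i(\hat x)$ is unique" means that exactly one index $i$ satisfies $g(\hat x,\xi_i)=q(\hat x)$. *)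

theory Defs
  imports "HOL-Analysis.Analysis"
begin

text \<open>Empirical (1 - eps)-quantile of g(x, xi) with xi uniform on the scenarios
  xi_1..xi_S; scenario i is encoded by the function g i.\<close>
definition quantile_fun ::
  "nat \<Rightarrow> real \<Rightarrow> (nat \<Rightarrow> 'a \<Rightarrow> real) \<Rightarrow> 'a \<Rightarrow> real" where
  "quantile_fun S eps g x =
     Inf {t. (\<Sum>i\<in>{1..S}. if g i x \<le> t then 1 else 0) / real S \<ge> 1 - eps}"

end

theory Submission
  imports Defs
begin

lemma qabs:
  fixes v :: "nat \<Rightarrow> real" and I :: "nat set"
  assumes fin: "finite I" and ne: "I \<noteq> {}" and c0: "0 < c" and cI: "c \<le> real (card I)"
  defines "T \<equiv> {t. c \<le> real (card {i\<in>I. v i \<le> t})}"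
  shows "Inf T \<in> T" "\<And>t. t \<in> T \<Longrightarrow> Inf T \<le> t"
    "real (card {i\<in>I. v i < Inf T}) < c"
proof -
  have bdd: "bdd_below T"
  proof
    fix t assume "t \<in> T"
    then have "card {i\<in>I. v i \<le> t} \<noteq> 0" using c0 unfolding T_def by auto
    then obtain i where "i \<in> I" "v i \<le> t" by (metis (no_types, lifting) card.empty empty_Collect_eq)
    then show "Min (v ` I) \<le> t" using fin by (meson Min_le_iff finite_imageI imageI image_is_empty ne)
  qed
  have lower: "\<And>t. t \<in> T \<Longrightarrow> Inf T \<le> t" using bdd by (rule cInf_lower[rotated])
  define A where "A = v ` {i\<in>I. v i \<in> T}"
  have Afin: "finite A" using fin unfolding A_def by auto
  have key: "\<exists>a\<in>A. a \<le> t" if "t \<in> T" for t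
  proof -
    have "card {i\<in>I. v i \<le> t} \<noteq> 0" using c0 that unfolding T_def by auto
    then have nz: "{i\<in>I. v i \<le> t} \<noteq> {}" by (metis card.empty)
    define m where "m = Max (v ` {i\<in>I. v i \<le> t})"
    have fm: "finite (v ` {i\<in>I. v i \<le> t})" using fin by auto
    have "m \<in> v ` {i\<in>I. v i \<le> t}" unfolding m_def using fm nz by (intro Max_in) auto
    then obtain j where j: "j \<in> I" "v j \<le> t" "m = v j" by auto
    have "{i\<in>I. v i \<le> m} = {i\<in>I. v i \<le> t}"
    proof (intro subset_antisym subsetI)
      fix x assume "x \<in> {i\<in>I. v i \<le> t}"
      then have "v x \<le> m" unfolding m_def using fm by (intro Max_ge) auto
      then show "x \<in> {i\<in>I. v i \<le> m}" using \<open>x \<in> {i\<in>I. v i \<le> t}\<close> by auto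
    qed (use j in auto)
    then have "m \<in> T" using that unfolding T_def by simp
    then show ?thesis using j unfolding A_def by auto
  qed
  have MT: "Max (v ` I) \<in> T"
  proof -
    have "{i\<in>I. v i \<le> Max (v ` I)} = I" using fin by auto
    then show ?thesis using cI unfolding T_def by simp
  qed
  then have Ane: "A \<noteq> {}" using key by auto
  have MinA: "Min A \<in> T" using Min_in[OF Afin Ane] unfolding A_def by auto
  have "Inf T = Min A"
  proof (rule antisym)
    show "Inf T \<le> Min A" using lower MinA by blast
    show "Min A \<le> Inf T"
      using MT proof (intro cInf_greatest)
      fix t assume "t \<in> T" then obtain a where "a \<in> A" "a \<le> t" using key by blast
      then show "Min A \<le> t" using Afin by (meson Min_le order_trans)
    qed auto
  qed
  then show IT: "Inf T \<in> T" using MinA by simp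
  show "\<And>t. t \<in> T \<Longrightarrow> Inf T \<le> t" by (rule lower)
  show "real (card {i\<in>I. v i < Inf T}) < c"
  proof (rule ccontr)
    assume "\<not> ?thesis"
    then have ge: "c \<le> real (card {i\<in>I. v i < Inf T})" by simp
    then have "{i\<in>I. v i < Inf T} \<noteq> {}" using c0 by (metis card.empty of_nat_0 not_le)
    moreover have fN: "finite (v ` {i\<in>I. v i < Inf T})" using fin by auto
    ultimately have mi: "Max (v ` {i\<in>I. v i < Inf T}) \<in> v ` {i\<in>I. v i < Inf T}"
      by (intro Max_in) auto
    define m where "m = Max (v ` {i\<in>I. v i < Inf T})"
    have mlt: "m < Inf T" using mi unfolding m_def by auto
    have sub: "{i\<in>I. v i < Inf T} \<subseteq> {i\<in>I. v i \<le> m}"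
    proof
      fix x assume "x \<in> {i\<in>I. v i < Inf T}"
      then have "v x \<le> m" unfolding m_def using fN by (intro Max_ge) auto
      then show "x \<in> {i\<in>I. v i \<le> m}" using \<open>x \<in> {i\<in>I. v i < Inf T}\<close> by auto
    qed
    have "card {i\<in>I. v i < Inf T} \<le> card {i\<in>I. v i \<le> m}"
      by (rule card_mono[OF _ sub]) (use fin in auto)
    then have "m \<in> T" using ge unfolding T_def by simp
    then show False using lower mlt by force
  qed
qed


lemma sum_ind_card: "finite A \<Longrightarrow> (\<Sum>i\<in>A. if P i then 1 else 0::real) = real (card {i\<in>A. P i})"
  by (simp add: sum.If_cases Int_def)

theorem lemmaA1:
  fixes S :: nat and eps :: real and g :: "nat \<Rightarrow> real ^ 'n \<Rightarrow> real"
  assumes "S \<ge> 1"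
    and "0 < eps" and "eps < 1"
    and "\<forall>i\<in>{1..S}. \<exists>C. C-lipschitz_on UNIV (g i)"
  shows "(\<exists>C. C-lipschitz_on UNIV (quantile_fun S eps g))
    \<and> (\<forall>xh i. i \<in> {1..S} \<and> g i xh = quantile_fun S eps g xh
           \<and> (\<forall>j\<in>{1..S}. g j xh = quantile_fun S eps g xh \<longrightarrow> j = i)
           \<and> (\<exists>r>0. \<forall>y\<in>ball xh r. g i differentiable at y)
         \<longrightarrow> quantile_fun S eps g differentiable at xh)"
proof -
  define I where "I = {1..S}"
  define c where "c = (1 - eps) * real S"
  define q where "q = quantile_fun S eps g"
  define T where "T x = {t. c \<le> real (card {i\<in>I. g i x \<le> t})}" for x
  have fin: "finite I" and ne: "I \<noteq> {}" using assms(1) unfolding I_def by auto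
  have cardI: "card I = S" unfolding I_def by simp
  have c0: "0 < c" unfolding c_def using assms by simp
  have cI: "c \<le> real (card I)" unfolding c_def cardI using assms by (simp add: mult_le_cancel_right1)
  have Spos: "0 < real S" using assms by simp
  have qT: "q x = Inf (T x)" for x
    unfolding q_def quantile_fun_def T_def c_def sum_ind_card[OF fin, unfolded I_def]
    using Spos by (simp add: I_def pos_le_divide_eq)
  have Q1: "q x \<in> T x" for x
    using qabs(1)[OF fin ne c0 cI, where v="\<lambda>i. g i x"] unfolding qT T_def .
  have Q2: "t \<in> T x \<Longrightarrow> q x \<le> t" for x t
    using qabs(2)[OF fin ne c0 cI, where v="\<lambda>i. g i x"] unfolding qT T_def by blast
  have Q3: "real (card {i\<in>I. g i x < q x}) < c" for x
    using qabs(3)[OF fin ne c0 cI, where v="\<lambda>i. g i x"] unfolding qT T_def .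
  obtain C :: "nat \<Rightarrow> real" where C: "\<forall>i\<in>I. (C i)-lipschitz_on UNIV (g i)" using assms(4) unfolding I_def by metis
  define L where "L = sum C I"
  have CL: "C i \<le> L" if "i \<in> I" for i
  proof -
    have "\<forall>j\<in>I. 0 \<le> C j" using C lipschitz_on_nonneg by blast
    then show ?thesis unfolding L_def using fin that by (intro member_le_sum) auto
  qed
  have gL: "g i y \<le> g i x + L * dist x y" if "i \<in> I" for i x y
  proof -
    have "dist (g i x) (g i y) \<le> C i * dist x y" using C that lipschitz_onD by blast
    also have "\<dots> \<le> L * dist x y" using CL[OF that] by (simp add: mult_right_mono)
    finally show ?thesis by (simp add: dist_real_def)
  qed
  have L0: "0 \<le> L"
  proof -
    have "\<forall>j\<in>I. 0 \<le> C j" using C lipschitz_on_nonneg by blast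
    then show ?thesis unfolding L_def by (intro sum_nonneg) auto
  qed
  have qL: "q y \<le> q x + L * dist x y" for x y
  proof -
    have sub: "{i\<in>I. g i x \<le> q x} \<subseteq> {i\<in>I. g i y \<le> q x + L * dist x y}"
    proof
      fix i assume "i \<in> {i\<in>I. g i x \<le> q x}"
      then show "i \<in> {i\<in>I. g i y \<le> q x + L * dist x y}" using gL[of i x y] gL[of i y x] by auto
    qed
    have "card {i\<in>I. g i x \<le> q x} \<le> card {i\<in>I. g i y \<le> q x + L * dist x y}"
      by (rule card_mono[OF _ sub]) (use fin in auto)
    then have "q x + L * dist x y \<in> T y" using Q1[of x] unfolding T_def by auto
    then show ?thesis by (rule Q2)
  qed
  have part1: "L-lipschitz_on UNIV q"
  proof (rule lipschitz_onI)
    fix x y :: "real ^ 'n"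
    show "dist (q x) (q y) \<le> L * dist x y"
      using qL[of x y] qL[of y x] by (simp add: dist_real_def dist_commute abs_le_iff)
  qed (rule L0)
  have part2: "q differentiable at xh"
    if i: "i \<in> I" and qi: "g i xh = q xh" and uniq: "\<forall>j\<in>I. g j xh = q xh \<longrightarrow> j = i"
      and dif: "\<exists>r>0. \<forall>y\<in>ball xh r. g i differentiable at y" for xh i
  proof -
    have cont: "(g l \<longlongrightarrow> g l xh) (at xh)" if "l \<in> I" for l
    proof -
      have "continuous_on UNIV (g l)" using C that lipschitz_on_continuous_on by blast
      then have "isCont (g l) xh" using continuous_on_eq_continuous_at by blast
      then show ?thesis by (simp add: isCont_def)
    qed
    have ev1: "eventually (\<lambda>x. (g l x < g i x \<longleftrightarrow> g l xh < g i xh) \<and> (g l x \<le> g i x \<longleftrightarrow> g l xh \<le> g i xh)) (at xh)"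
      if l: "l \<in> I - {i}" for l
    proof -
      have ne: "g l xh \<noteq> g i xh" using uniq l qi by auto
      have t: "((\<lambda>x. g l x - g i x) \<longlongrightarrow> g l xh - g i xh) (at xh)"
        using cont[of l] cont[OF i] l by (intro tendsto_diff) auto
      show ?thesis
      proof (cases "g l xh < g i xh")
        case True
        then have "eventually (\<lambda>x. g l x - g i x < 0) (at xh)"
          using order_tendstoD(2)[OF t, of 0] by simp
        then show ?thesis by eventually_elim (use True in auto)
      next
        case False
        then have "g l xh - g i xh > 0" using ne by simp
        then have "eventually (\<lambda>x. g l x - g i x > 0) (at xh)"
          using order_tendstoD(1)[OF t, of 0] by simp
        then show ?thesis by eventually_elim (use False ne in auto)
      qed
    qed
    have "eventually (\<lambda>x. \<forall>l\<in>I - {i}. (g l x < g i x \<longleftrightarrow> g l xh < g i xh) \<and> (g l x \<le> g i x \<longleftrightarrow> g l xh \<le> g i xh)) (at xh)"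
      using fin ev1 by (intro eventually_ball_finite) auto
    then have evq: "eventually (\<lambda>x. q x = g i x) (at xh)"
    proof eventually_elim
      case (elim x)
      have s1: "{l\<in>I. g l x \<le> g i x} = {l\<in>I. g l xh \<le> q xh}"
      proof (rule Collect_cong)
        fix l show "(l\<in>I \<and> g l x \<le> g i x) = (l\<in>I \<and> g l xh \<le> q xh)"
          using elim qi by (cases "l = i") auto
      qed
      have s2: "{l\<in>I. g l x < g i x} = {l\<in>I. g l xh < q xh}"
      proof (rule Collect_cong)
        fix l show "(l\<in>I \<and> g l x < g i x) = (l\<in>I \<and> g l xh < q xh)"
          using elim qi by (cases "l = i") auto
      qed
      have "g i x \<in> T x" using Q1[of xh] s1 unfolding T_def by simp
      then have le: "q x \<le> g i x" by (rule Q2)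
      show ?case
      proof (rule ccontr)
        assume "q x \<noteq> g i x"
        then have lt: "q x < g i x" using le by simp
        have sub: "{l\<in>I. g l x \<le> q x} \<subseteq> {l\<in>I. g l x < g i x}" using lt by auto
        have "card {l\<in>I. g l x \<le> q x} \<le> card {l\<in>I. g l x < g i x}"
          by (rule card_mono[OF _ sub]) (use fin in auto)
        then have "c \<le> real (card {l\<in>I. g l xh < q xh})" using Q1[of x] s2 unfolding T_def by auto
        then show False using Q3[of xh] by simp
      qed
    qed
    then obtain d where d: "d > 0" "\<And>x. x \<noteq> xh \<Longrightarrow> dist x xh < d \<Longrightarrow> q x = g i x"
      unfolding eventually_at by auto
    obtain r where "r > 0" "\<forall>y\<in>ball xh r. g i differentiable at y" using dif by blast
    then have "g i differentiable at xh" by simp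
    then obtain D where D: "(g i has_derivative D) (at xh)" unfolding differentiable_def by blast
    have "(q has_derivative D) (at xh within UNIV)"
      by (rule has_derivative_transform_within[OF D[unfolded] d(1)]) (simp, metis d(2) qi)
    then show ?thesis unfolding differentiable_def by auto
  qed
  show ?thesis
    using part1 part2 unfolding q_def I_def by blast
qed

end
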